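(* Let $b\ge1$, $1\le a\le b$, $t\ge0$ be integers and $d=2t+1$. Let $\nu=\nu^{\text{on-diag}}+\nu^{\text{off-diag}}$, where $\nu^{\text{on-diag}}$ is the number of pairs $(k,q)$ with $k$ odd, $1\le k<d$, $0\le q\le k$, $q\equiv0\pmod{2b}$, and $\nu^{\text{off-diag}}$ is the number of pairs $(k,q)$ with $k$ odd, $1\le k<d$, $-k\le q\le k$, $q\equiv2a-1\pmod{2b}$. Then $\nu=\tfrac{3}{2b}t^2+\tfrac{2+b}{2b}t+\tfrac{2a(a-b-1)+b+1}{2b}+c$, where $c=\tfrac{1}{2b}\Big([t+1-a]_b^2+\big(b-2-2[t-a]_b\big)[t+1-a]_b+[a+t]_b\big(b-2-2[a+t-1]_b+[a+t]_b\big)+[t]_b^2+\big(b-1-2[t-\tfrac12]_b\big)[t]_b\Big)$, and $0\le c\le 3b$.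
   Context: For real $x$ and positive integer $y$, $[x]_y:=x\bmod y=x-y\lfloor x/y\rfloor$. The quantity $\nu$ is the number of quadratic Knill–Laflamme conditions a real $(\mathsf{BD}_{2b},\delta_a)$-covariant spin code must satisfy to have distance $d$. *)

theory Defs
  imports Complex_Main
begin

definition rmod :: "real \<Rightarrow> int \<Rightarrow> real" where
  "rmod x y = x - of_int y * of_int \<lfloor>x / of_int y\<rfloor>"

definition nu_on :: "int \<Rightarrow> int \<Rightarrow> nat" where
  "nu_on b d = card {(k :: int, q :: int). odd k \<and> 1 \<le> k \<and> k < d \<and> 0 \<le> q \<and> q \<le> k
                     \<and> q mod (2 * b) = 0}"

definition nu_off :: "int \<Rightarrow> int \<Rightarrow> int \<Rightarrow> nat" where
  "nu_off a b d = card {(k :: int, q :: int). odd k \<and> 1 \<le> k \<and> k < d \<and> -k \<le> q \<and> q \<le> k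
                     \<and> q mod (2 * b) = (2 * a - 1) mod (2 * b)}"

definition nu :: "int \<Rightarrow> int \<Rightarrow> int \<Rightarrow> nat" where
  "nu a b d = nu_on b d + nu_off a b d"

definition c_corr :: "int \<Rightarrow> int \<Rightarrow> int \<Rightarrow> real" where
  "c_corr a b t = (1 / (2 * of_int b)) *
     ( (rmod (of_int (t + 1 - a)) b)\<^sup>2
     + (of_int b - 2 - 2 * rmod (of_int (t - a)) b) * rmod (of_int (t + 1 - a)) b
     + rmod (of_int (a + t)) b * (of_int b - 2 - 2 * rmod (of_int (a + t - 1)) b + rmod (of_int (a + t)) b)
     + (rmod (of_int t) b)\<^sup>2
     + (of_int b - 1 - 2 * rmod (of_int t - 1 / 2) b) * rmod (of_int t) b )"

end

theory Submission
  imports Defs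
begin

lemma div_plus1:
  fixes x m :: int assumes m: "m > 0"
  shows "(x + 1) div m = x div m + (if m dvd (x + 1) then 1 else 0)"
proof -
  define q r where "q = x div m" and "r = x mod m"
  have x: "x = q * m + r" unfolding q_def r_def by simp
  have r: "0 \<le> r" "r < m" unfolding r_def using m by auto
  show ?thesis
  proof (cases "r + 1 = m")
    case True
    then have "x + 1 = (q + 1) * m" using x by (simp add: algebra_simps)
    then show ?thesis using m q_def by simp
  next
    case False
    then have r1: "r + 1 < m" using r by simp
    have xe: "x + 1 = (r + 1) + q * m" using x by simp
    have "(x + 1) div m = q" unfolding xe using r r1 m by simp
    moreover have "(x + 1) mod m = r + 1" unfolding xe using r r1 m by simp
    ultimately show ?thesis using q_def r by (auto simp: dvd_eq_mod_eq_0)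
  qed
qed

lemma count_cong:
  fixes m e L :: int assumes m: "m > 0"
  shows "card {q. L \<le> q \<and> q \<le> L - 1 + int j \<and> q mod m = e mod m}
         = nat ((L - 1 + int j - e) div m - (L - 1 - e) div m)"
proof (induction j)
  case 0
  have "{q. L \<le> q \<and> q < L \<and> q mod m = e mod m} = {}" by auto
  then show ?case by (simp del: Collect_empty_eq)
next
  case (Suc j)
  let ?A = "{q. L \<le> q \<and> q \<le> L - 1 + int j \<and> q mod m = e mod m}"
  have fin: "finite ?A" by (rule finite_subset[of _ "{L..L - 1 + int j}"]) auto
  have mono: "(L - 1 - e) div m \<le> (L - 1 + int j - e) div m"
    by (rule zdiv_mono1) (use m in auto)
  have step: "(L - 1 + int (Suc j) - e) div m = (L - 1 + int j - e) div m
      + (if (L + int j) mod m = e mod m then 1 else 0)"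
  proof -
    define X where "X = L - 1 + int j - e"
    have e1: "L - 1 + int (Suc j) - e = X + 1" unfolding X_def by simp
    have d: "(X + 1) div m = X div m + (if m dvd (X + 1) then 1 else 0)"
      using m div_plus1 by blast
    have "m dvd (X + 1) \<longleftrightarrow> (L + int j) mod m = e mod m"
      unfolding X_def by (simp add: mod_eq_dvd_iff algebra_simps)
    then have "(X + 1) div m = X div m + (if (L + int j) mod m = e mod m then 1 else 0)"
      using d by simp
    then show ?thesis unfolding e1 X_def .
  qed
  show ?case
  proof (cases "(L + int j) mod m = e mod m")
    case True
    have "{q. L \<le> q \<and> q \<le> L - 1 + int (Suc j) \<and> q mod m = e mod m} = insert (L + int j) ?A"
      using True by auto
    moreover have "L + int j \<notin> ?A" by auto
    ultimately show ?thesis using Suc fin step True mono by simp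
  next
    case False
    have "{q. L \<le> q \<and> q \<le> L - 1 + int (Suc j) \<and> q mod m = e mod m} = ?A"
      using False by (auto, smt (verit))
    then show ?thesis using Suc step False by simp
  qed
qed

definition Gi :: "int \<Rightarrow> int \<Rightarrow> int" where
  "Gi b m = m^2 - (m mod b)^2 - b * m + b * (m mod b)"

lemma Gi_step:
  fixes b m :: int assumes b: "b > 0"
  shows "Gi b (m + 1) = Gi b m + 2 * b * (m div b)"
proof -
  obtain q r where qd: "m div b = q" and rd: "m mod b = r" by blast
  have x: "m = q * b + r" using qd rd by (metis mult.commute div_mult_mod_eq)
  have r: "0 \<le> r" "r < b" using rd b by auto
  show ?thesis
  proof (cases "r + 1 = b")
    case True
    then have "m + 1 = (q + 1) * b" using x by (simp add: algebra_simps)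
    then have m1: "(m + 1) mod b = 0" by simp
    have bb: "b = r + 1" using True by simp
    show ?thesis unfolding Gi_def m1 qd rd
      by (simp add: x bb power2_eq_square algebra_simps)
  next
    case False
    then have r1: "r + 1 < b" using r by simp
    have xe: "m + 1 = (r + 1) + q * b" using x by simp
    have m1: "(m + 1) mod b = r + 1" unfolding xe using r r1 b by simp
    show ?thesis unfolding Gi_def m1 qd rd
      by (simp add: x power2_eq_square algebra_simps)
  qed
qed

lemma div_odd2:
  fixes x b :: int assumes b: "b > 0"
  shows "(2 * x + 1) div (2 * b) = x div b"
proof -
  have "(2 * x + 1) div (2 * b) = (2 * x + 1) div 2 div b"
    using b by (simp add: zdiv_zmult2_eq)
  also have "(2 * x + 1) div 2 = x" by simp
  finally show ?thesis .
qed

lemma div_neg1: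
  fixes y b :: int assumes b: "b > 0"
  shows "(- y - 1) div b = - (y div b) - 1"
proof -
  define q r where "q = y div b" and "r = y mod b"
  have x: "y = q * b + r" unfolding q_def r_def by simp
  have r: "0 \<le> r" "r < b" unfolding r_def using b by auto
  have xe: "- y - 1 = (b - 1 - r) + (- q - 1) * b" using x by (simp add: algebra_simps)
  have "(- y - 1) div b = - q - 1" unfolding xe using r b by simp
  then show ?thesis using q_def by simp
qed

lemma split_rows:
  fixes n :: nat
  assumes bnd: "\<And>k q. P k q \<Longrightarrow> - k \<le> q \<and> q \<le> k"
  shows "card {(k :: int, q :: int). odd k \<and> 1 \<le> k \<and> k < 2 * int (Suc n) + 1 \<and> P k q}
       = card {(k :: int, q :: int). odd k \<and> 1 \<le> k \<and> k < 2 * int n + 1 \<and> P k q}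
         + card {q. P (2 * int n + 1) q}"
proof -
  let ?A = "{(k :: int, q :: int). odd k \<and> 1 \<le> k \<and> k < 2 * int n + 1 \<and> P k q}"
  let ?B = "Pair (2 * int n + 1) ` {q. P (2 * int n + 1) q}"
  have eq: "{(k :: int, q :: int). odd k \<and> 1 \<le> k \<and> k < 2 * int (Suc n) + 1 \<and> P k q} = ?A \<union> ?B"
  proof (rule set_eqI, clarify)
    fix k q :: int
    have "odd k \<and> 1 \<le> k \<and> k < 2 * int (Suc n) + 1 \<longleftrightarrow>
          (odd k \<and> 1 \<le> k \<and> k < 2 * int n + 1) \<or> k = 2 * int n + 1"
      by auto presburger+
    then show "((k, q) \<in> {(k, q). odd k \<and> 1 \<le> k \<and> k < 2 * int (Suc n) + 1 \<and> P k q}) =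
          ((k, q) \<in> ?A \<union> ?B)" by auto
  qed
  have finA: "finite ?A"
    by (rule finite_subset[of _ "{1..2 * int n + 1} \<times> {-(2 * int n + 1)..2 * int n + 1}"])
       (auto dest: bnd)
  have finq: "finite {q. P (2 * int n + 1) q}"
    by (rule finite_subset[of _ "{-(2 * int n + 1)..2 * int n + 1}"]) (auto dest: bnd)
  have disj: "?A \<inter> ?B = {}" by auto
  have "card ?B = card {q. P (2 * int n + 1) q}"
    by (rule card_image) (auto simp: inj_on_def)
  then show ?thesis unfolding eq using finA finq disj by (simp add: card_Un_disjoint)
qed

lemma row_on:
  fixes b :: int and n :: nat assumes b: "b \<ge> 1"
  shows "int (card {q. 0 \<le> q \<and> q \<le> 2 * int n + 1 \<and> q mod (2 * b) = 0}) = int n div b + 1"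
proof -
  have "{q. 0 \<le> q \<and> q \<le> 2 * int n + 1 \<and> q mod (2 * b) = 0}
      = {q. 0 \<le> q \<and> q \<le> 0 - 1 + int (2 * n + 2) \<and> q mod (2 * b) = 0 mod (2 * b)}" by auto
  moreover have "card {q. 0 \<le> q \<and> q \<le> 0 - 1 + int (2 * n + 2) \<and> q mod (2 * b) = 0 mod (2 * b)}
      = nat ((0 - 1 + int (2 * n + 2) - 0) div (2 * b) - (0 - 1 - 0) div (2 * b))"
    by (rule count_cong) (use b in simp)
  moreover have "(0 - 1 + int (2 * n + 2) - 0) div (2 * b) = int n div b"
  proof -
    have e: "0 - 1 + int (2 * n + 2) - 0 = 2 * int n + 1" by simp
    show ?thesis unfolding e using div_odd2[of b "int n"] b by simp
  qed
  moreover have "(0 - 1 - 0 :: int) div (2 * b) = -1"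
    using b by (simp add: div_eq_minus1)
  moreover have "int n div b \<ge> 0" using b by (simp add: pos_imp_zdiv_nonneg_iff)
  ultimately show ?thesis using b by simp
qed

lemma row_off:
  fixes a b :: int and n :: nat assumes b: "b \<ge> 1"
  shows "int (card {q. - (2 * int n + 1) \<le> q \<and> q \<le> 2 * int n + 1
            \<and> q mod (2 * b) = (2 * a - 1) mod (2 * b)})
         = (int n + 1 - a) div b + (int n + a) div b + 1"
proof -
  have "{q. - (2 * int n + 1) \<le> q \<and> q \<le> 2 * int n + 1 \<and> q mod (2 * b) = (2 * a - 1) mod (2 * b)}
      = {q. - (2 * int n + 1) \<le> q \<and> q \<le> - (2 * int n + 1) - 1 + int (4 * n + 3)
            \<and> q mod (2 * b) = (2 * a - 1) mod (2 * b)}" by auto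
  moreover have "card {q. - (2 * int n + 1) \<le> q \<and> q \<le> - (2 * int n + 1) - 1 + int (4 * n + 3)
            \<and> q mod (2 * b) = (2 * a - 1) mod (2 * b)}
      = nat ((- (2 * int n + 1) - 1 + int (4 * n + 3) - (2 * a - 1)) div (2 * b)
             - (- (2 * int n + 1) - 1 - (2 * a - 1)) div (2 * b))"
    by (rule count_cong) (use b in simp)
  moreover have "(- (2 * int n + 1) - 1 + int (4 * n + 3) - (2 * a - 1)) div (2 * b) = (int n + 1 - a) div b"
  proof -
    have e: "- (2 * int n + 1) - 1 + int (4 * n + 3) - (2 * a - 1) = 2 * (int n + 1 - a)" by simp
    show ?thesis unfolding e by (rule div_mult_mult1) simp
  qed
  moreover have "(- (2 * int n + 1) - 1 - (2 * a - 1)) div (2 * b) = - ((int n + a) div b) - 1"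
  proof -
    have "- (2 * int n + 1) - 1 - (2 * a - 1) = 2 * (- (int n + a) - 1) + 1" by simp
    then show ?thesis using b div_odd2[of b "- (int n + a) - 1"] div_neg1[of b "int n + a"] by simp
  qed
  moreover have "0 \<le> (int n + 1 - a) div b + (int n + a) div b + 1"
  proof -
    have "(int n + 1 - a) div b \<ge> (- (int n + a) - 1) div b" by (rule zdiv_mono1) (use b in auto)
    then show ?thesis using div_neg1[of b "int n + a"] b by simp
  qed
  ultimately show ?thesis by simp
qed

lemma nu_int:
  fixes a b :: int and n :: nat assumes b: "b \<ge> 1" and a: "1 \<le> a" "a \<le> b"
  shows "2 * b * int (nu a b (2 * int n + 1))
       = 4 * b * int n + Gi b (int n) + Gi b (int n + 1 - a) + Gi b (int n + a) - 2 * b * (a - 1)"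
proof (induction n)
  case 0
  have e1: "nu a b (2 * int 0 + 1) = 0"
    unfolding nu_def nu_on_def nu_off_def by (auto simp: card_eq_0_iff)
  have g0: "Gi b 0 = 0" unfolding Gi_def by simp
  have ga: "Gi b a = 0"
  proof (cases "a = b")
    case True then show ?thesis unfolding Gi_def by (simp add: power2_eq_square)
  next
    case False then have "a mod b = a" using a by simp
    then show ?thesis unfolding Gi_def by simp
  qed
  have g1: "Gi b (1 - a) = 2 * b * (a - 1)"
  proof (cases "a = 1")
    case True then show ?thesis unfolding Gi_def by simp
  next
    case False
    have "(1 - a) mod b = 1 - a + b"
    proof -
      have "(1 - a) mod b = (1 - a + b) mod b" by simp
      also have "\<dots> = 1 - a + b" using a False by (intro mod_pos_pos_trivial) auto
      finally show ?thesis .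
    qed
    then show ?thesis unfolding Gi_def by (simp only:) (simp add: power2_eq_square algebra_simps)
  qed
  show ?case using e1 g0 ga g1 by simp
next
  case (Suc n)
  have on: "nu_on b (2 * int (Suc n) + 1) = nu_on b (2 * int n + 1)
      + card {q. 0 \<le> q \<and> q \<le> 2 * int n + 1 \<and> q mod (2 * b) = 0}"
    unfolding nu_on_def
    using split_rows[of "\<lambda>k q. 0 \<le> q \<and> q \<le> k \<and> q mod (2 * b) = 0" n] by simp
  have off: "nu_off a b (2 * int (Suc n) + 1) = nu_off a b (2 * int n + 1)
      + card {q. - (2 * int n + 1) \<le> q \<and> q \<le> 2 * int n + 1
            \<and> q mod (2 * b) = (2 * a - 1) mod (2 * b)}"
    unfolding nu_off_def
    using split_rows[of "\<lambda>k q. - k \<le> q \<and> q \<le> k \<and> q mod (2 * b) = (2 * a - 1) mod (2 * b)" n] by simp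
  have "int (nu a b (2 * int (Suc n) + 1)) = int (nu a b (2 * int n + 1))
       + (int n div b + 1) + ((int n + 1 - a) div b + (int n + a) div b + 1)"
    unfolding nu_def using on off row_on[OF b, of n] row_off[OF b, of n a] by simp
  moreover have "Gi b (int (Suc n)) = Gi b (int n) + 2 * b * (int n div b)"
    using Gi_step[of b "int n"] b by (simp add: add.commute)
  moreover have "Gi b (int (Suc n) + 1 - a) = Gi b (int n + 1 - a) + 2 * b * ((int n + 1 - a) div b)"
    using Gi_step[of b "int n + 1 - a"] b by (simp add: algebra_simps)
  moreover have "Gi b (int (Suc n) + a) = Gi b (int n + a) + 2 * b * ((int n + a) div b)"
    using Gi_step[of b "int n + a"] b by (simp add: algebra_simps)
  ultimately show ?case using Suc.IH by (simp add: algebra_simps)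
qed

lemma rmod_int:
  fixes x b :: int assumes b: "b \<ge> 1"
  shows "rmod (of_int x) b = of_int (x mod b)"
proof -
  have "\<lfloor>(of_int x :: real) / of_int b\<rfloor> = x div b" by (rule floor_divide_of_int_eq)
  then have "rmod (of_int x) b = of_int (x - b * (x div b))" unfolding rmod_def by simp
  also have "x - b * (x div b) = x mod b" by (simp add: minus_mult_div_eq_mod)
  finally show ?thesis .
qed

lemma rmod_half:
  fixes t b :: int assumes b: "b \<ge> 1"
  shows "rmod (of_int t - 1 / 2) b = of_int ((t - 1) mod b) + 1 / 2"
proof -
  obtain q r where qd: "(t - 1) div b = q" and rd: "(t - 1) mod b = r" by blast
  have x: "t - 1 = q * b + r" using qd rd by (metis mult.commute div_mult_mod_eq)
  have r: "0 \<le> r" "r < b" using rd b by auto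
  have fl: "\<lfloor>(of_int t - 1 / 2) / of_int b :: real\<rfloor> = q"
  proof (rule floor_unique)
    have tq: "real_of_int t = of_int q * of_int b + of_int r + 1" using x by (simp add: algebra_simps flip: of_int_mult of_int_add)
    have rr: "real_of_int r \<ge> 0" "real_of_int r + 1 \<le> of_int b" using r by auto
    have bp: "real_of_int b > 0" using b by simp
    show "of_int q \<le> (of_int t - 1 / 2) / (of_int b :: real)"
      using tq rr bp by (simp add: field_simps)
    show "(of_int t - 1 / 2) / (of_int b :: real) < of_int q + 1"
      using tq rr bp by (simp add: field_simps)
  qed
  have "rmod (of_int t - 1 / 2) b = of_int t - 1/2 - of_int b * of_int q" unfolding rmod_def fl by simp
  also have "\<dots> = of_int r + 1 / 2" using x by (simp add: algebra_simps flip: of_int_mult of_int_add of_int_diff)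
  finally show ?thesis using rd by simp
qed

lemma step_ident:
  fixes x b :: int assumes b: "b \<ge> 1"
  shows "((x + 1) mod b)^2 + (b - 2 - 2 * (x mod b)) * ((x + 1) mod b)
       = ((x + 1) mod b) * (b - (x + 1) mod b)"
proof -
  obtain q r where qd: "x div b = q" and rd: "x mod b = r" by blast
  have x: "x = q * b + r" using qd rd by (metis mult.commute div_mult_mod_eq)
  have r: "0 \<le> r" "r < b" using rd b by auto
  show ?thesis
  proof (cases "r + 1 = b")
    case True
    then have "x + 1 = (q + 1) * b" using x by (simp add: algebra_simps)
    then have "(x + 1) mod b = 0" by simp
    then show ?thesis by simp
  next
    case False
    then have r1: "r + 1 < b" using r by simp
    have xe: "x + 1 = (r + 1) + q * b" using x by simp
    have m1: "(x + 1) mod b = r + 1" unfolding xe using r r1 b by simp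
    show ?thesis unfolding m1 rd by (simp add: power2_eq_square algebra_simps)
  qed
qed

lemma c_corr_eq:
  fixes a b t :: int assumes b: "b \<ge> 1"
  shows "c_corr a b t = (of_int (((t + 1 - a) mod b) * (b - (t + 1 - a) mod b)
       + ((a + t) mod b) * (b - (a + t) mod b) + (t mod b) * (b - t mod b))) / (2 * of_int b)"
proof -
  have i1: "((t + 1 - a) mod b)^2 + (b - 2 - 2 * ((t - a) mod b)) * ((t + 1 - a) mod b)
       = ((t + 1 - a) mod b) * (b - (t + 1 - a) mod b)"
    using step_ident[OF b, of "t - a"] by (simp add: algebra_simps)
  have i2: "((a + t) mod b) * (b - 2 - 2 * ((a + t - 1) mod b) + (a + t) mod b)
       = ((a + t) mod b) * (b - (a + t) mod b)"
    using step_ident[OF b, of "a + t - 1"] by (simp add: algebra_simps power2_eq_square)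
  have i3: "(t mod b)^2 + (b - 2 - 2 * ((t - 1) mod b)) * (t mod b)
       = (t mod b) * (b - t mod b)"
    using step_ident[OF b, of "t - 1"] by (simp add: algebra_simps)
  have i1r: "(real_of_int ((t + 1 - a) mod b))^2 + (of_int b - 2 - 2 * of_int ((t - a) mod b)) * of_int ((t + 1 - a) mod b)
       = of_int (((t + 1 - a) mod b) * (b - (t + 1 - a) mod b))"
    using arg_cong[OF i1, of real_of_int] by simp
  have i2r: "real_of_int ((a + t) mod b) * (of_int b - 2 - 2 * of_int ((a + t - 1) mod b) + of_int ((a + t) mod b))
       = of_int (((a + t) mod b) * (b - (a + t) mod b))"
    using arg_cong[OF i2, of real_of_int] by simp
  have i3r: "(real_of_int (t mod b))^2 + (of_int b - 1 - 2 * (of_int ((t - 1) mod b) + 1 / 2)) * of_int (t mod b)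
       = of_int ((t mod b) * (b - t mod b))"
    using arg_cong[OF i3, of real_of_int] by (simp add: algebra_simps)
  have "c_corr a b t = (1 / (2 * of_int b)) *
     ( (real_of_int ((t + 1 - a) mod b))^2 + (of_int b - 2 - 2 * of_int ((t - a) mod b)) * of_int ((t + 1 - a) mod b)
     + real_of_int ((a + t) mod b) * (of_int b - 2 - 2 * of_int ((a + t - 1) mod b) + of_int ((a + t) mod b))
     + ((real_of_int (t mod b))^2 + (of_int b - 1 - 2 * (of_int ((t - 1) mod b) + 1 / 2)) * of_int (t mod b)))"
    unfolding c_corr_def rmod_int[OF b] rmod_half[OF b] by (simp add: algebra_simps)
  also have "\<dots> = (1 / (2 * of_int b)) * of_int (((t + 1 - a) mod b) * (b - (t + 1 - a) mod b)
       + ((a + t) mod b) * (b - (a + t) mod b) + (t mod b) * (b - t mod b))"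
    unfolding i1r i2r i3r by simp
  finally show ?thesis by simp
qed

lemma aux_div:
  fixes N T B P X :: real
  assumes "N = (3 * T^2 + (2 + B) * T + P + X) / (2 * B)"
  shows "N = 3 / (2 * B) * T^2 + (2 + B) / (2 * B) * T + P / (2 * B) + X / (2 * B)"
proof -
  have "(3 * T^2 + (2 + B) * T + P + X) / (2 * B) = 3 * T^2 / (2 * B) + (2 + B) * T / (2 * B) + P / (2 * B) + X / (2 * B)"
    by (simp only: add_divide_distrib)
  then show ?thesis using assms by simp
qed

lemma rb_bounds:
  fixes x b :: int assumes b: "b \<ge> 1"
  shows "0 \<le> x mod b * (b - x mod b)" "x mod b * (b - x mod b) \<le> b * b"
proof -
  have r: "0 \<le> x mod b" "x mod b < b" using b by auto
  show "0 \<le> x mod b * (b - x mod b)" using r by simp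
  show "x mod b * (b - x mod b) \<le> b * b" using r by (intro mult_mono) auto
qed

theorem theoremS3:
  fixes a b t d :: int
  assumes "b \<ge> 1" and "1 \<le> a" and "a \<le> b" and "t \<ge> 0" and "d = 2 * t + 1"
  shows "real (nu a b d) =
           3 / (2 * of_int b) * (of_int t)\<^sup>2 + (2 + of_int b) / (2 * of_int b) * of_int t
           + (2 * of_int a * (of_int a - of_int b - 1) + of_int b + 1) / (2 * of_int b)
           + c_corr a b t
         \<and> 0 \<le> c_corr a b t \<and> c_corr a b t \<le> 3 * of_int b"
proof -
  note b = assms(1)
  obtain n :: nat where tn: "t = int n" using assms(4) nonneg_int_cases by blast
  define r1 r2 r3 where "r1 = t mod b" and "r2 = (t + 1 - a) mod b" and "r3 = (a + t) mod b"
  have key: "2 * b * int (nu a b d)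
       = 4 * b * t + Gi b t + Gi b (t + 1 - a) + Gi b (t + a) - 2 * b * (a - 1)"
    using nu_int[OF b assms(2,3), of n] tn assms(5) by simp
  have G1: "Gi b t = t^2 - b * t + r1 * (b - r1)" unfolding Gi_def r1_def by (simp add: algebra_simps power2_eq_square)
  have G2: "Gi b (t + 1 - a) = (t + 1 - a)^2 - b * (t + 1 - a) + r2 * (b - r2)" unfolding Gi_def r2_def by (simp add: algebra_simps power2_eq_square)
  have G3: "Gi b (t + a) = (t + a)^2 - b * (t + a) + r3 * (b - r3)" unfolding Gi_def r3_def by (simp add: algebra_simps power2_eq_square add.commute)
  have C: "c_corr a b t = of_int (r2 * (b - r2) + r3 * (b - r3) + r1 * (b - r1)) / (2 * of_int b)"
    unfolding c_corr_eq[OF b] r1_def r2_def r3_def ..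
  have key2: "2 * b * int (nu a b d) = 3 * t^2 + (2 + b) * t + (2 * a * (a - b - 1) + b + 1)
       + (r2 * (b - r2) + r3 * (b - r3) + r1 * (b - r1))"
    unfolding key G1 G2 G3 by (simp add: algebra_simps power2_eq_square)
  have key3: "2 * real_of_int b * real (nu a b d) = 3 * (of_int t)^2 + (2 + of_int b) * of_int t
       + (2 * of_int a * (of_int a - of_int b - 1) + of_int b + 1)
       + of_int (r2 * (b - r2) + r3 * (b - r3) + r1 * (b - r1))"
    using arg_cong[OF key2, of real_of_int] by simp
  have bp: "real_of_int b > 0" using b by simp
  have eq: "real (nu a b d) =
           3 / (2 * of_int b) * (of_int t)\<^sup>2 + (2 + of_int b) / (2 * of_int b) * of_int t
           + (2 * of_int a * (of_int a - of_int b - 1) + of_int b + 1) / (2 * of_int b)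
           + c_corr a b t"
  proof -
    have "real (nu a b d) = (3 * (of_int t)^2 + (2 + of_int b) * of_int t
       + (2 * of_int a * (of_int a - of_int b - 1) + of_int b + 1)
       + of_int (r2 * (b - r2) + r3 * (b - r3) + r1 * (b - r1))) / (2 * real_of_int b)"
      using key3 bp by (simp add: eq_divide_eq mult.commute)
    then show ?thesis unfolding C by (rule aux_div)
  qed
  have lo: "0 \<le> r2 * (b - r2) + r3 * (b - r3) + r1 * (b - r1)"
    using rb_bounds(1)[OF b] unfolding r1_def r2_def r3_def by (simp add: add_nonneg_nonneg)
  have hi: "r2 * (b - r2) + r3 * (b - r3) + r1 * (b - r1) \<le> 3 * b * b"
    using rb_bounds(2)[OF b, of t] rb_bounds(2)[OF b, of "t + 1 - a"] rb_bounds(2)[OF b, of "a + t"]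
    unfolding r1_def r2_def r3_def by simp
  have hir: "real_of_int (r2 * (b - r2) + r3 * (b - r3) + r1 * (b - r1)) \<le> 3 * of_int b * of_int b"
    using hi by (metis of_int_le_iff of_int_mult of_int_numeral)
  have lor: "0 \<le> real_of_int (r2 * (b - r2) + r3 * (b - r3) + r1 * (b - r1))"
    using lo by (simp only: of_int_0_le_iff)
  have "0 \<le> c_corr a b t" unfolding C by (rule divide_nonneg_pos[OF lor]) (use bp in simp)
  moreover have "c_corr a b t \<le> 3 * of_int b"
  proof -
    have "c_corr a b t \<le> 3 * of_int b * of_int b / (2 * of_int b)"
      unfolding C by (rule divide_right_mono[OF hir]) (use bp in simp)
    also have "\<dots> \<le> 3 * of_int b" using bp by (simp add: field_simps)
    finally show ?thesis .
  qed
  ultimately show ?thesis using eq by simp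
qed

end
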